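(* Let $\mathcal{H}$ be a finite set of hypotheses and $\mathcal{R}$ a finite collection of decision regions $r\subseteq\mathcal{H}$. Let $k_{\mathrm{iff}}$ be the largest cardinality of a set $R\subseteq\mathcal{R}$ such that for every $r\in R$ there is a hypothesis $h$ with $h\notin r$ and $h\in r'$ for all $r'\in R\setminus\{r\}$. Let $k_{\mathrm{as}}=m+1$, where $m$ is the largest cardinality of a set $R\subseteq\mathcal{R}$ such that (1) some hypothesis $\tilde h$ lies in every region of $R$, and (2) for every $r\in R$ there is a hypothesis $h$ with $h\notin r$ and $h\in r'$ for all $r'\in R\setminus\{r\}$. Then $k_{\mathrm{as}}\ge k_{\mathrm{iff}}$. *)

theory Defs
  imports Main
begin

definition separating :: "'h set \<Rightarrow> 'h set set \<Rightarrow> bool" where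
  "separating H R \<longleftrightarrow> (\<forall>r\<in>R. \<exists>h\<in>H. h \<notin> r \<and> (\<forall>r'\<in>R - {r}. h \<in> r'))"

definition k_iff :: "'h set \<Rightarrow> 'h set set \<Rightarrow> nat" where
  "k_iff H Rs = Max {card R | R. R \<subseteq> Rs \<and> separating H R}"

definition k_as :: "'h set \<Rightarrow> 'h set set \<Rightarrow> nat" where
  "k_as H Rs = Max {card R | R. R \<subseteq> Rs \<and> (\<exists>ht\<in>H. \<forall>r\<in>R. ht \<in> r) \<and> separating H R} + 1"

end

theory Submission
  imports Defs
begin

theorem proposition2:
  fixes H :: "'h set" and Rs :: "'h set set"
  assumes "finite H" and "H \<noteq> {}" and "finite Rs" and "\<forall>r\<in>Rs. r \<subseteq> H"
  shows "k_as H Rs \<ge> k_iff H Rs"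
proof -
  let ?A = "{card R | R. R \<subseteq> Rs \<and> separating H R}"
  let ?B = "{card R | R. R \<subseteq> Rs \<and> (\<exists>ht\<in>H. \<forall>r\<in>R. ht \<in> r) \<and> separating H R}"
  have finA: "finite ?A"
    by (rule finite_subset[of _ "card ` Pow Rs"]) (blast, simp add: assms(3))
  have finB: "finite ?B"
    by (rule finite_subset[of _ "card ` Pow Rs"]) (blast, simp add: assms(3))
  have "0 \<in> ?A" using assms(2) proof -
    have "{} \<subseteq> Rs \<and> separating H {}" by (simp add: separating_def)
    thus ?thesis by force
  qed
  hence "?A \<noteq> {}" by blast
  then obtain R where R: "R \<subseteq> Rs" "separating H R" "k_iff H Rs = card R"
    proof -
    have "Max ?A \<in> ?A" using Max_in[OF finA \<open>?A \<noteq> {}\<close>] .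
    thus ?thesis using that unfolding k_iff_def by blast
  qed
  show ?thesis
  proof (cases "R = {}")
    case True thus ?thesis using R by (simp add: k_as_def)
  next
    case False
    then obtain r0 where r0: "r0 \<in> R" by blast
    from R(2) r0 obtain h where h: "h \<in> H" "h \<notin> r0" "\<forall>r'\<in>R - {r0}. h \<in> r'"
      unfolding separating_def by blast
    have sep: "separating H (R - {r0})" unfolding separating_def
    proof
      fix r assume r: "r \<in> R - {r0}"
      then obtain g where "g \<in> H" "g \<notin> r" "\<forall>r'\<in>R - {r}. g \<in> r'"
        using R(2) unfolding separating_def by auto
      thus "\<exists>h\<in>H. h \<notin> r \<and> (\<forall>r'\<in>R - {r0} - {r}. h \<in> r')" by auto
    qed
    have finR: "finite R" using R(1) assms(3) finite_subset by blast
    have "card (R - {r0}) \<in> ?B" using R(1) h sep by (intro CollectI exI[of _ "R - {r0}"]) auto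
    hence "card (R - {r0}) \<le> Max ?B" using Max_ge[OF finB] by blast
    moreover have "card (R - {r0}) + 1 = card R" using finR r0
    proof -
      have "card R > 0" using finR r0 card_gt_0_iff by blast
      thus ?thesis using finR r0 by (simp add: card_Diff_singleton)
    qed
    ultimately show ?thesis using R(3) unfolding k_as_def by linarith
  qed
qed

end
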